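(* Let $w$ be an infinite word and let $n_0<n_1<n_2$ be three consecutive lengths of palindromic prefixes of $w$ (no palindromic prefix of $w$ has length strictly between $n_0$ and $n_1$ or between $n_1$ and $n_2$), with corresponding prefixes $\pi_0,\pi_1,\pi_2$. Write $\pi_1=\pi_0b$. Then either $\pi_2=\pi_1b$ (i.e. $\pi_2=\pi_1\pi_0^{-1}\pi_1$), or $n_2>n_0+n_1$.
   Context: Infinite words are right-infinite; a finite word is a palindrome if it equals its reversal, the empty word being a palindrome. *)

theory Defs
  imports Main
begin

definition pref :: "(nat \<Rightarrow> 'a) \<Rightarrow> nat \<Rightarrow> 'a list" where
  "pref w n = map w [0..<n]"

definition palindrome :: "'a list \<Rightarrow> bool" where
  "palindrome xs \<longleftrightarrow> rev xs = xs"

end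

theory Submission
  imports Defs
begin

lemma pal_pref: "palindrome (pref w n) \<longleftrightarrow> (\<forall>i<n. w i = w (n - Suc i))"
proof -
  have "palindrome (pref w n) \<longleftrightarrow> (\<forall>i<n. rev (map w [0..<n]) ! i = map w [0..<n] ! i)"
    unfolding palindrome_def pref_def by (simp add: list_eq_iff_nth_eq)
  also have "\<dots> \<longleftrightarrow> (\<forall>i<n. w (n - Suc i) = w i)"
    by (intro all_cong1 imp_cong refl) (simp add: rev_nth)
  finally show ?thesis by (simp add: eq_commute)
qed

theorem lemma5p5:
  fixes w :: "nat \<Rightarrow> 'a" and n0 n1 n2 :: nat
  assumes "n0 < n1" and "n1 < n2"
    and "palindrome (pref w n0)" and "palindrome (pref w n1)" and "palindrome (pref w n2)"
    and "\<And>m. n0 < m \<Longrightarrow> m < n1 \<Longrightarrow> \<not> palindrome (pref w m)"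
    and "\<And>m. n1 < m \<Longrightarrow> m < n2 \<Longrightarrow> \<not> palindrome (pref w m)"
  shows "(let b = drop n0 (pref w n1) in pref w n2 = pref w n1 @ b) \<or> n2 > n0 + n1"
proof (cases "n2 > n0 + n1")
  case True then show ?thesis by simp
next
  case False
  define p where "p = n2 - n1"
  have P0: "\<And>i. i < n0 \<Longrightarrow> w i = w (n0 - Suc i)" using assms(3) pal_pref by blast
  have P1: "\<And>i. i < n1 \<Longrightarrow> w i = w (n1 - Suc i)" using assms(4) pal_pref by blast
  have P2: "\<And>i. i < n2 \<Longrightarrow> w i = w (n2 - Suc i)" using assms(5) pal_pref by blast
  have pn: "p \<le> n0" "0 < p" using False assms(2) p_def by auto
  have per: "w i = w (i - p)" if "p \<le> i" "i < n2" for i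
  proof -
    have "w i = w (n2 - Suc i)" using P2 that by blast
    also have "\<dots> = w (n1 - Suc (n2 - Suc i))" by (rule P1) (use that p_def in linarith)
    also have "n1 - Suc (n2 - Suc i) = i - p" using that p_def assms(2) by auto
    finally show ?thesis .
  qed
  have xp: "palindrome (pref w (n0 + p))"
    unfolding pal_pref
  proof (intro allI impI)
    fix i assume i: "i < n0 + p"
    show "w i = w (n0 + p - Suc i)"
    proof (cases "p \<le> i")
      case True
      have "w i = w (i - p)" by (rule per[OF True]) (use i assms(1,2) p_def in linarith)
      also have "\<dots> = w (n0 - Suc (i - p))" by (rule P0) (use i True in linarith)
      also have "n0 - Suc (i - p) = n0 + p - Suc i" using True i by auto
      finally show ?thesis .
    next
      case False
      have "w (n0 + p - Suc i) = w (n0 + p - Suc i - p)"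
        by (rule per) (use False pn i assms(1,2) p_def in linarith)+
      also have "n0 + p - Suc i - p = n0 - Suc i" by auto
      also have "w (n0 - Suc i) = w i" by (rule P0[symmetric]) (use False pn in linarith)
      finally show ?thesis by simp
    qed
  qed
  have eq: "n0 + p = n1"
  proof (rule ccontr)
    assume "n0 + p \<noteq> n1"
    moreover have "n0 + p < n2" using assms(1,2) p_def by auto
    ultimately show False using assms(6,7)[of "n0 + p"] xp pn by linarith
  qed
  have "pref w n2 = pref w n1 @ drop n0 (pref w n1)"
  proof (rule nth_equalityI)
    show "length (pref w n2) = length (pref w n1 @ drop n0 (pref w n1))"
      using eq p_def assms(1,2) by (simp add: pref_def)
  next
    fix i assume "i < length (pref w n2)"
    hence i: "i < n2" by (simp add: pref_def)
    show "pref w n2 ! i = (pref w n1 @ drop n0 (pref w n1)) ! i"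
    proof (cases "i < n1")
      case True then show ?thesis using i by (simp add: pref_def nth_append)
    next
      case False
      have "w i = w (i - p)" by (rule per) (use False i eq in linarith)+
      moreover have "i - p = n0 + (i - n1)" using eq False by auto
      ultimately show ?thesis using i False eq p_def assms(1,2)
        by (simp add: pref_def nth_append)
    qed
  qed
  then show ?thesis by (simp add: Let_def)
qed

end
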